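(* Let $G$ be a group, let $(\Gamma,\psi)$ be a $G$-gain graph on $n$ vertices, let $\pi$ be a unitary representation of $G$, and let $\alpha=\{C_0,C_1,\dots,C_{2k}\}$ be a $\pi$-WQH partition of the vertex set of $\Gamma$. Let $(\Gamma^\alpha,\psi^\alpha)$ be the gain graph obtained from $(\Gamma,\psi)$ and $\alpha$ as described in the context, and let $Q_\alpha$ be the matrix associated with $\alpha$. Then, with vertices ordered as $C_0,C_1,\dots,C_{2k}$, $$\pi(A_{(\Gamma^\alpha,\psi^\alpha)})=\pi(Q_\alpha)\,\pi(A_{(\Gamma,\psi)})\,\pi(Q_\alpha),$$ and in particular $(\Gamma,\psi)$ and $(\Gamma^\alpha,\psi^\alpha)$ are $\pi$-cospectral.
   Context: A $G$-gain graph $(\Gamma,\psi)$ consists of a directed graph $\Gamma=(V,A)$ in which every arc $(u,w)$ has its reverse $(w,u)$ (no loops), and a gain function $\psi:A\to G$ with $\psi(w,u)=\psi(u,w)^{-1}$. Set $\psi(v,w)=0\in\mathbb{C}G$ when $v,w$ are not adjacent. For $V=\{v_1,\dots,v_n\}$, the adjacency matrix $A_{(\Gamma,\psi)}\in M_n(\mathbb{C}G)$ has $(i,j)$ entry $\psi(v_i,v_j)$ if $v_i\sim v_j$ and $0$ otherwise; $\mathbb{C}G$ is the complex group algebra with neutral element $1_G$. A unitary representation of degree $d$ is a group homomorphism $\pi:G\to U_d(\mathbb{C})$; it is extended linearly to an algebra homomorphism $\pi:\mathbb{C}G\to M_d(\mathbb{C})$, and to matrices $M\in M_{a,b}(\mathbb{C}G)$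 by replacing each entry $M_{i,j}$ by the $d\times d$ block $\pi(M_{i,j})$. The matrix $\pi(A_{(\Gamma,\psi)})$ is Hermitian; its spectrum is the $\pi$-spectrum of $(\Gamma,\psi)$, and two gain graphs are $\pi$-cospectral if they have the same $\pi$-spectrum. Given a partition $\alpha=\{C_0,\dots,C_{2k}\}$ of $V$, let $\Psi_i(v)=\sum_{w\in C_i,\,w\sim v}\psi(v,w)\in\mathbb{C}G$. It is a $\pi$-WQH partition if: (1) $|C_i|=|C_{i+1}|$ for every odd $i<2k$; (2) for $i,j\in\{1,\dots,2k\}$ and $v,v'\in C_i$, $\pi(\Psi_j(v))=\pi(\Psi_j(v'))$; (3) for odd $i,j<2k$ and $v\in C_i$, $v'\in C_{i+1}$, $\pi(\Psi_j(v))=\pi(\Psi_{j+1}(v'))$ and $\pi(\Psi_{j+1}(v))=\pi(\Psi_j(v'))$; (4) for every $v\in C_0$ and odd $i<2k$, either (a) $\Psi_i(v)=\Psi_{i+1}(v)$, or (b) $\Psi_i(v)=|C_i|g_1$ and $\Psi_{i+1}(v)=|C_{i+1}|g_2$ for some distinct $g_1,g_2\in G\cup\{0\}$. The gain graph $(\Gamma^\alpha,\psi^\alpha)$ on the same vertex set is defined by (with $\psi^\alpha(v,w)=0$ meaning non-adjacency): $\psi^\alpha(v,w)=\psi(v,w)$ for $v,w\in C_1\cup\dots\cup C_{2k}$ and for $v,w\in C_0$; for $v\in C_0$ and odd $i<2k$ with $\Psi_i(v)=\Psi_{i+1}(v)$, $\psi^\alpha(v,w)=\psi(v,w)$ for $w\in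 C_i\cup C_{i+1}$; for $v\in C_0$ and odd $i<2k$ in case (b) with $g_1,g_2$, $\psi^\alpha(v,w)=g_2$ for $w\in C_i$ and $\psi^\alpha(v,w)=g_1$ for $w\in C_{i+1}$ (reversed arcs get inverse gains). For $m\ge1$ let $Q_m=\begin{pmatrix} I_m-\frac1m J_m & \frac1m J_m\\ \frac1m J_m & I_m-\frac1m J_m\end{pmatrix}\in M_{2m}(\mathbb{C}G)$, with $I_m$ the identity (diagonal entries $1_G$) and $J_m$ the all-$1_G$ matrix. With $m_t=|C_{2t-1}|=|C_{2t}|$, $t=1,\dots,k$, let $Q_\alpha=\mathrm{diag}(I_{|C_0|},Q_{m_1},\dots,Q_{m_k})\in M_n(\mathbb{C}G)$. *)

theory Defs
  imports "HOL-Algebra.Group" "Jordan_Normal_Form.Matrix" "Jordan_Normal_Form.Char_Poly"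
    "HOL-Computational_Algebra.Polynomial"
begin

(* A G-gain graph is encoded by gam :: nat => nat => 'g option:
   gam v w = Some g  means v ~ w with gain psi(v,w) = g;  gam v w = None means
   non-adjacent (the paper's convention psi(v,w) = 0). *)

definition gain_graph :: "('g, 'b) monoid_scheme \<Rightarrow> nat \<Rightarrow> (nat \<Rightarrow> nat \<Rightarrow> 'g option) \<Rightarrow> bool" where
  "gain_graph G n gam \<longleftrightarrow>
     (\<forall>v w. (v \<ge> n \<or> w \<ge> n) \<longrightarrow> gam v w = None) \<and>
     (\<forall>v. gam v v = None) \<and>
     (\<forall>v w g. gam v w = Some g \<longrightarrow> g \<in> carrier G \<and> gam w v = Some (inv\<^bsub>G\<^esub> g))"

(* Complex group algebra CG: finitely supported functions 'g => complex. *)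
type_synonym 'g cgalg = "'g \<Rightarrow> complex"

definition delta :: "'g \<Rightarrow> 'g cgalg" where
  "delta g = (\<lambda>h. if h = g then 1 else 0)"

definition emb :: "'g option \<Rightarrow> 'g cgalg" where
  "emb x = (case x of None \<Rightarrow> (\<lambda>_. 0) | Some g \<Rightarrow> delta g)"

definition cg_smult :: "complex \<Rightarrow> 'g cgalg \<Rightarrow> 'g cgalg" where
  "cg_smult c x = (\<lambda>h. c * x h)"

definition adj_mat :: "(nat \<Rightarrow> nat \<Rightarrow> 'g option) \<Rightarrow> nat \<Rightarrow> nat \<Rightarrow> 'g cgalg" where
  "adj_mat gam i j = emb (gam i j)"

definition conj_transpose :: "complex mat \<Rightarrow> complex mat" where
  "conj_transpose U = mat (dim_col U) (dim_row U) (\<lambda>(i,j). cnj (U $$ (j,i)))"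

definition unitary_rep :: "('g, 'b) monoid_scheme \<Rightarrow> nat \<Rightarrow> ('g \<Rightarrow> complex mat) \<Rightarrow> bool" where
  "unitary_rep G d rho \<longleftrightarrow>
     (\<forall>g\<in>carrier G. rho g \<in> carrier_mat d d \<and> rho g * conj_transpose (rho g) = 1\<^sub>m d) \<and>
     (\<forall>g\<in>carrier G. \<forall>h\<in>carrier G. rho (g \<otimes>\<^bsub>G\<^esub> h) = rho g * rho h)"

definition pi_cg :: "('g, 'b) monoid_scheme \<Rightarrow> nat \<Rightarrow> ('g \<Rightarrow> complex mat) \<Rightarrow> 'g cgalg \<Rightarrow> complex mat" where
  "pi_cg G d rho x = mat d d (\<lambda>(a,b). \<Sum>g\<in>{g\<in>carrier G. x g \<noteq> 0}. x g * (rho g $$ (a,b)))"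

definition pi_mat :: "('g, 'b) monoid_scheme \<Rightarrow> nat \<Rightarrow> ('g \<Rightarrow> complex mat) \<Rightarrow> nat \<Rightarrow> (nat \<Rightarrow> nat \<Rightarrow> 'g cgalg) \<Rightarrow> complex mat" where
  "pi_mat G d rho n M = mat (n*d) (n*d) (\<lambda>(i,j). pi_cg G d rho (M (i div d) (j div d)) $$ (i mod d, j mod d))"

definition pi_spectrum :: "('g, 'b) monoid_scheme \<Rightarrow> nat \<Rightarrow> ('g \<Rightarrow> complex mat) \<Rightarrow> nat \<Rightarrow> (nat \<Rightarrow> nat \<Rightarrow> 'g option) \<Rightarrow> complex multiset" where
  "pi_spectrum G d rho n gam = proots (char_poly (pi_mat G d rho n (adj_mat gam)))"

definition pi_cospectral where
  "pi_cospectral G d rho n gam1 gam2 \<longleftrightarrow> pi_spectrum G d rho n gam1 = pi_spectrum G d rho n gam2"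

(* Ordered partition: C_0 = {0..<c0}; for t < k = length ms, with m_t = ms!t,
   C_(2t+1) and C_(2t+2) are consecutive blocks of size m_t (vertices ordered as C_0, C_1, ..., C_2k). *)
definition offs :: "nat \<Rightarrow> nat list \<Rightarrow> nat \<Rightarrow> nat" where
  "offs c0 ms t = c0 + 2 * sum_list (take t ms)"

definition cls :: "nat \<Rightarrow> nat list \<Rightarrow> nat \<Rightarrow> nat set" where
  "cls c0 ms i =
     (if i = 0 then {0..<c0}
      else if odd i then {offs c0 ms ((i-1) div 2) ..< offs c0 ms ((i-1) div 2) + ms ! ((i-1) div 2)}
      else {offs c0 ms ((i-2) div 2) + ms ! ((i-2) div 2) ..< offs c0 ms ((i-2) div 2) + 2 * ms ! ((i-2) div 2)})"

definition Psi :: "nat \<Rightarrow> nat list \<Rightarrow> (nat \<Rightarrow> nat \<Rightarrow> 'g option) \<Rightarrow> nat \<Rightarrow> nat \<Rightarrow> 'g cgalg" where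
  "Psi c0 ms gam i v = (\<lambda>h. \<Sum>w\<in>cls c0 ms i. emb (gam v w) h)"

definition caseb :: "('g, 'b) monoid_scheme \<Rightarrow> nat \<Rightarrow> nat list \<Rightarrow> (nat \<Rightarrow> nat \<Rightarrow> 'g option) \<Rightarrow> nat \<Rightarrow> nat \<Rightarrow> 'g option \<Rightarrow> 'g option \<Rightarrow> bool" where
  "caseb G c0 ms gam t v g1 g2 \<longleftrightarrow>
     g1 \<noteq> g2 \<and> set_option g1 \<subseteq> carrier G \<and> set_option g2 \<subseteq> carrier G \<and>
     Psi c0 ms gam (2*t+1) v = cg_smult (of_nat (ms ! t)) (emb g1) \<and>
     Psi c0 ms gam (2*t+2) v = cg_smult (of_nat (ms ! t)) (emb g2)"

definition pi_WQH :: "('g, 'b) monoid_scheme \<Rightarrow> nat \<Rightarrow> ('g \<Rightarrow> complex mat) \<Rightarrow> nat \<Rightarrow> nat list \<Rightarrow> (nat \<Rightarrow> nat \<Rightarrow> 'g option) \<Rightarrow> bool" where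
  "pi_WQH G d rho c0 ms gam \<longleftrightarrow>
     (\<forall>i\<in>{1..2 * length ms}. \<forall>j\<in>{1..2 * length ms}. \<forall>v\<in>cls c0 ms i. \<forall>v'\<in>cls c0 ms i.
        pi_cg G d rho (Psi c0 ms gam j v) = pi_cg G d rho (Psi c0 ms gam j v')) \<and>
     (\<forall>t<length ms. \<forall>s<length ms. \<forall>v\<in>cls c0 ms (2*t+1). \<forall>v'\<in>cls c0 ms (2*t+2).
        pi_cg G d rho (Psi c0 ms gam (2*s+1) v) = pi_cg G d rho (Psi c0 ms gam (2*s+2) v') \<and>
        pi_cg G d rho (Psi c0 ms gam (2*s+2) v) = pi_cg G d rho (Psi c0 ms gam (2*s+1) v')) \<and>
     (\<forall>v\<in>cls c0 ms 0. \<forall>t<length ms.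
        Psi c0 ms gam (2*t+1) v = Psi c0 ms gam (2*t+2) v \<or>
        (\<exists>g1 g2. caseb G c0 ms gam t v g1 g2))"

definition blk :: "nat \<Rightarrow> nat list \<Rightarrow> nat \<Rightarrow> nat" where
  "blk c0 ms w = (THE t. t < length ms \<and> w \<in> cls c0 ms (2*t+1) \<union> cls c0 ms (2*t+2))"

definition new_gain :: "('g, 'b) monoid_scheme \<Rightarrow> nat \<Rightarrow> nat list \<Rightarrow> (nat \<Rightarrow> nat \<Rightarrow> 'g option) \<Rightarrow> nat \<Rightarrow> nat \<Rightarrow> 'g option" where
  "new_gain G c0 ms gam v w =
     (let t = blk c0 ms w in
      if Psi c0 ms gam (2*t+1) v = Psi c0 ms gam (2*t+2) v then gam v w
      else (let (g1, g2) = (SOME (g1, g2). caseb G c0 ms gam t v g1 g2) in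
            if w \<in> cls c0 ms (2*t+1) then g2 else g1))"

definition alpha_graph :: "('g, 'b) monoid_scheme \<Rightarrow> nat \<Rightarrow> nat list \<Rightarrow> (nat \<Rightarrow> nat \<Rightarrow> 'g option) \<Rightarrow> nat \<Rightarrow> nat \<Rightarrow> 'g option" where
  "alpha_graph G c0 ms gam v w =
     (let n = c0 + 2 * sum_list ms in
      if v \<in> cls c0 ms 0 \<and> c0 \<le> w \<and> w < n then new_gain G c0 ms gam v w
      else if w \<in> cls c0 ms 0 \<and> c0 \<le> v \<and> v < n then map_option (\<lambda>g. inv\<^bsub>G\<^esub> g) (new_gain G c0 ms gam w v)
      else gam v w)"

definition Q_coef :: "nat \<Rightarrow> nat list \<Rightarrow> nat \<Rightarrow> nat \<Rightarrow> complex" where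
  "Q_coef c0 ms i j =
     (if i < c0 \<and> j < c0 then (if i = j then 1 else 0)
      else \<Sum>t<length ms.
        (let m = of_nat (ms ! t); P = {offs c0 ms t ..< offs c0 ms t + 2 * ms ! t} in
         if i \<in> P \<and> j \<in> P then
           (if (i \<in> cls c0 ms (2*t+1)) = (j \<in> cls c0 ms (2*t+1))
            then (if i = j then 1 else 0) - 1 / m else 1 / m)
         else 0))"

definition Q_alpha :: "('g, 'b) monoid_scheme \<Rightarrow> nat \<Rightarrow> nat list \<Rightarrow> nat \<Rightarrow> nat \<Rightarrow> 'g cgalg" where
  "Q_alpha G c0 ms i j = cg_smult (Q_coef c0 ms i j) (delta \<one>\<^bsub>G\<^esub>)"

end

theory Submission
  imports Defs
begin


lemma offs_Suc: "t < length ms \<Longrightarrow> offs c0 ms (Suc t) = offs c0 ms t + 2 * ms ! t"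
  by (simp add: offs_def take_Suc_conv_app_nth)

lemma offs_mono: assumes "t \<le> t'" shows "offs c0 ms t \<le> offs c0 ms t'"
proof -
  have "take t' ms = take t ms @ take (t'-t) (drop t ms)"
    using take_add[of t "t'-t" ms] assms by simp
  then show ?thesis by (simp add: offs_def)
qed

lemma offs_ge: "c0 \<le> offs c0 ms t" by (simp add: offs_def)

lemma offs_len: "offs c0 ms (length ms) = c0 + 2 * sum_list ms" by (simp add: offs_def)

definition Pb :: "nat \<Rightarrow> nat list \<Rightarrow> nat \<Rightarrow> nat set" where
  "Pb c0 ms t = {offs c0 ms t ..< offs c0 ms t + 2 * ms ! t}"

lemma cls0: "cls c0 ms 0 = {0..<c0}" by (simp add: cls_def)
lemma cls1: "cls c0 ms (2*t+1) = {offs c0 ms t ..< offs c0 ms t + ms ! t}" by (simp add: cls_def)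
lemma cls2: "cls c0 ms (2*t+2) = {offs c0 ms t + ms ! t ..< offs c0 ms t + 2 * ms ! t}"
proof -
  have "2*t+2 \<noteq> 0" "\<not> odd (2*t+2)" "(2*t+2-2) div 2 = t" by auto
  then show ?thesis unfolding cls_def by presburger
qed

lemma cls1s: "cls c0 ms (Suc (2*t)) = {offs c0 ms t ..< offs c0 ms t + ms ! t}"
  using cls1[of c0 ms t] by simp
lemma cls2s: "cls c0 ms (Suc (Suc (2*t))) = {offs c0 ms t + ms ! t ..< offs c0 ms t + 2 * ms ! t}"
  using cls2[of c0 ms t] by simp

lemma finite_cls: "finite (cls c0 ms i)" by (simp add: cls_def)

lemma cls_union: "cls c0 ms (2*t+1) \<union> cls c0 ms (2*t+2) = Pb c0 ms t"
  unfolding cls1 cls2 Pb_def by auto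

lemma Pb_le: assumes "t < length ms" "k \<in> Pb c0 ms t"
  shows "c0 \<le> k" "k < c0 + 2 * sum_list ms"
proof -
  show "c0 \<le> k" using assms offs_ge[of c0 ms t] by (auto simp: Pb_def)
  have "offs c0 ms (Suc t) \<le> offs c0 ms (length ms)" using assms by (intro offs_mono) auto
  then show "k < c0 + 2 * sum_list ms" using assms offs_Suc[of t ms c0] offs_len[of c0 ms]
    by (auto simp: Pb_def)
qed

lemma Pb_ex: "c0 \<le> w \<Longrightarrow> w < c0 + 2 * sum_list ms \<Longrightarrow> \<exists>t<length ms. w \<in> Pb c0 ms t"
proof (induction ms arbitrary: c0)
  case Nil
  then show ?case by simp
next
  case (Cons m ms)
  show ?case
  proof (cases "w < c0 + 2*m")
    case True
    then show ?thesis using Cons.prems by (intro exI[of _ 0]) (auto simp: Pb_def offs_def)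
  next
    case False
    then obtain t where t: "t < length ms" "w \<in> Pb (c0 + 2*m) ms t"
      using Cons.IH[of "c0+2*m"] Cons.prems by auto
    have "Pb c0 (m#ms) (Suc t) = Pb (c0 + 2*m) ms t"
      by (simp add: Pb_def offs_def algebra_simps)
    then show ?thesis using t by (intro exI[of _ "Suc t"]) (auto simp: algebra_simps)
  qed
qed

lemma Pb_uniq: assumes "t < length ms" "t' < length ms" "w \<in> Pb c0 ms t" "w \<in> Pb c0 ms t'"
  shows "t = t'"
proof (rule ccontr)
  assume ne: "t \<noteq> t'"
  have key: "False" if "a < b" "b < length ms" "w \<in> Pb c0 ms a" "w \<in> Pb c0 ms b" for a b
  proof -
    have "offs c0 ms (Suc a) \<le> offs c0 ms b" using that by (intro offs_mono) auto
    then show False using that offs_Suc[of a ms c0] by (auto simp: Pb_def)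
  qed
  show False using ne assms key[of t t'] key[of t' t] by (cases "t < t'") auto
qed

lemma blk_eq: assumes "t < length ms" "w \<in> Pb c0 ms t" shows "blk c0 ms w = t"
  unfolding blk_def cls_union using assms Pb_uniq[of _ ms _ w c0]
  by (intro the_equality) auto

lemma blk_in: assumes "c0 \<le> w" "w < c0 + 2 * sum_list ms"
  shows "blk c0 ms w < length ms" "w \<in> Pb c0 ms (blk c0 ms w)"
  using Pb_ex[OF assms] blk_eq[of _ ms w c0] by auto

definition sgb :: "nat \<Rightarrow> nat list \<Rightarrow> nat \<Rightarrow> complex" where
  "sgb c0 ms k = (if k < offs c0 ms (blk c0 ms k) + ms ! (blk c0 ms k) then 1 else -1)"

lemma sgb1: assumes "t < length ms" "k \<in> cls c0 ms (2*t+1)" shows "sgb c0 ms k = 1"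
proof -
  have "k \<in> Pb c0 ms t" using assms cls_union[of c0 ms t] by blast
  then have "blk c0 ms k = t" using blk_eq assms by blast
  then show ?thesis using assms(2) unfolding sgb_def cls1 by simp
qed

lemma sgb2: assumes "t < length ms" "k \<in> cls c0 ms (2*t+2)" shows "sgb c0 ms k = -1"
proof -
  have "k \<in> Pb c0 ms t" using assms cls_union[of c0 ms t] by blast
  then have "blk c0 ms k = t" using blk_eq assms by blast
  then show ?thesis using assms(2) unfolding sgb_def cls2 by simp
qed

lemma sgb_sq: "sgb c0 ms k * sgb c0 ms k = 1" by (simp add: sgb_def)
lemma cnj_sgb: "cnj (sgb c0 ms k) = sgb c0 ms k" by (simp add: sgb_def)

definition Rm :: "nat \<Rightarrow> nat list \<Rightarrow> nat \<Rightarrow> nat \<Rightarrow> complex" where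
  "Rm c0 ms i k = (if c0 \<le> i \<and> i < c0 + 2 * sum_list ms \<and> c0 \<le> k \<and> k < c0 + 2 * sum_list ms
     \<and> blk c0 ms i = blk c0 ms k then sgb c0 ms i * sgb c0 ms k / of_nat (ms ! blk c0 ms i) else 0)"

definition Sg :: "nat \<Rightarrow> nat list \<Rightarrow> nat \<Rightarrow> (nat \<Rightarrow> complex) \<Rightarrow> complex" where
  "Sg c0 ms s h = (\<Sum>k\<in>cls c0 ms (2*s+1). h k) - (\<Sum>k\<in>cls c0 ms (2*s+2). h k)"

lemma sum_Pb: assumes "s < length ms"
  shows "(\<Sum>k\<in>Pb c0 ms s. sgb c0 ms k * h k) = Sg c0 ms s h"
proof -
  have d: "cls c0 ms (2*s+1) \<inter> cls c0 ms (2*s+2) = {}" by (auto simp: cls1 cls2 cls1s cls2s)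
  have "(\<Sum>k\<in>Pb c0 ms s. sgb c0 ms k * h k) = (\<Sum>k\<in>cls c0 ms (2*s+1). sgb c0 ms k * h k)
     + (\<Sum>k\<in>cls c0 ms (2*s+2). sgb c0 ms k * h k)"
    using sum.union_disjoint[of "cls c0 ms (2*s+1)" "cls c0 ms (2*s+2)" "\<lambda>k. sgb c0 ms k * h k"] d
      cls_union[of c0 ms s] finite_cls[of c0 ms] by simp
  also have "\<dots> = Sg c0 ms s h"
    unfolding Sg_def using sgb1[OF assms] sgb2[OF assms]
    by (simp add: sum_negf)
  finally show ?thesis .
qed

lemma Pb_sub: "s < length ms \<Longrightarrow> Pb c0 ms s \<subseteq> {..<c0 + 2 * sum_list ms}"
  using Pb_le by blast

lemma sum_R_left: assumes "c0 \<le> i" "i < c0 + 2 * sum_list ms"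
  shows "(\<Sum>k<c0 + 2 * sum_list ms. Rm c0 ms i k * h k)
     = sgb c0 ms i / of_nat (ms ! blk c0 ms i) * Sg c0 ms (blk c0 ms i) h"
proof -
  let ?s = "blk c0 ms i"
  have s: "?s < length ms" "i \<in> Pb c0 ms ?s" using blk_in[OF assms] by auto
  have "(\<Sum>k<c0 + 2 * sum_list ms. Rm c0 ms i k * h k) = (\<Sum>k\<in>Pb c0 ms ?s. Rm c0 ms i k * h k)"
  proof (rule sum.mono_neutral_right)
    show "Pb c0 ms ?s \<subseteq> {..<c0 + 2 * sum_list ms}" using Pb_sub[OF s(1)] .
    show "\<forall>k\<in>{..<c0 + 2 * sum_list ms} - Pb c0 ms ?s. Rm c0 ms i k * h k = 0"
    proof
      fix k assume k: "k \<in> {..<c0 + 2 * sum_list ms} - Pb c0 ms ?s"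
      have "Rm c0 ms i k = 0"
      proof (rule ccontr)
        assume "Rm c0 ms i k \<noteq> 0"
        then have "c0 \<le> k" "k < c0 + 2 * sum_list ms" "blk c0 ms k = ?s"
          unfolding Rm_def by (auto split: if_splits)
        then show False using blk_in(2)[of c0 k ms] k by simp
      qed
      then show "Rm c0 ms i k * h k = 0" by simp
    qed
  qed simp
  also have "\<dots> = (\<Sum>k\<in>Pb c0 ms ?s. sgb c0 ms i / of_nat (ms ! ?s) * (sgb c0 ms k * h k))"
  proof (rule sum.cong)
    fix k assume k: "k \<in> Pb c0 ms ?s"
    have "c0 \<le> k" "k < c0 + 2 * sum_list ms" "blk c0 ms k = ?s"
      using Pb_le[OF s(1) k] blk_eq[OF s(1) k] by auto
    then show "Rm c0 ms i k * h k = sgb c0 ms i / of_nat (ms ! ?s) * (sgb c0 ms k * h k)"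
      using assms unfolding Rm_def by simp
  qed simp
  also have "\<dots> = sgb c0 ms i / of_nat (ms ! ?s) * Sg c0 ms ?s h"
    by (simp only: sum_distrib_left[symmetric] sum_Pb[OF s(1)])
  finally show ?thesis .
qed

lemma Rm_sym: "Rm c0 ms i k = Rm c0 ms k i"
  by (auto simp: Rm_def)

lemma sum_R_right: assumes "c0 \<le> j" "j < c0 + 2 * sum_list ms"
  shows "(\<Sum>l<c0 + 2 * sum_list ms. h l * Rm c0 ms l j)
     = sgb c0 ms j / of_nat (ms ! blk c0 ms j) * Sg c0 ms (blk c0 ms j) h"
  using sum_R_left[OF assms, of h] by (simp add: Rm_sym mult.commute)

lemma Rm_lt: "i < c0 \<Longrightarrow> Rm c0 ms i k = 0" "k < c0 \<Longrightarrow> Rm c0 ms i k = 0"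
  by (auto simp: Rm_def)



lemma cls12_disj: "x \<in> cls c0 ms (2*t+2) \<Longrightarrow> x \<notin> cls c0 ms (2*t+1)"
  unfolding cls1 cls2 by auto

lemma Pb_cases: assumes "x \<in> Pb c0 ms t"
  obtains "x \<in> cls c0 ms (2*t+1)" | "x \<in> cls c0 ms (2*t+2)"
  using assms cls_union[of c0 ms t] by blast

lemma Q_coef_eq: assumes "i < c0 + 2 * sum_list ms" "j < c0 + 2 * sum_list ms"
  shows "Q_coef c0 ms i j = (if i = j then 1 else 0) - Rm c0 ms i j"
proof (cases "i < c0 \<and> j < c0")
  case True
  then show ?thesis by (simp add: Q_coef_def Rm_def)
next
  case False
  define Y where "Y t = (if (i \<in> cls c0 ms (2*t+1)) = (j \<in> cls c0 ms (2*t+1))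
            then (if i = j then 1 else 0) - 1 / of_nat (ms ! t) else 1 / (of_nat (ms ! t) :: complex))" for t
  define X where "X t = (if i \<in> Pb c0 ms t \<and> j \<in> Pb c0 ms t then Y t else 0)" for t
  have Q: "Q_coef c0 ms i j = (\<Sum>t<length ms. X t)"
    unfolding Q_coef_def X_def Y_def Pb_def Let_def by (rule if_not_P[OF False])
  show ?thesis
  proof (cases "i < c0")
    case True
    have "i \<notin> Pb c0 ms t" for t using offs_ge[of c0 ms t] True by (simp add: Pb_def)
    then have "X t = 0" for t by (simp add: X_def)
    then have "Q_coef c0 ms i j = 0" using Q by simp
    moreover have "Rm c0 ms i j = 0" using True by (simp add: Rm_def)
    moreover have "i \<noteq> j" using True False by auto
    ultimately show ?thesis by simp
  next
    case ic: False
    let ?s = "blk c0 ms i"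
    have s: "?s < length ms" "i \<in> Pb c0 ms ?s" using blk_in[of c0 i ms] ic assms by auto
    have X0: "X t = 0" if "t \<in> {..<length ms} - {?s}" for t
    proof -
      have "i \<notin> Pb c0 ms t" using that Pb_uniq[of t ms ?s i c0] s by auto
      then show ?thesis by (simp add: X_def)
    qed
    have "(\<Sum>t<length ms. X t) = X ?s + (\<Sum>t\<in>{..<length ms} - {?s}. X t)"
      using s(1) by (intro sum.remove) auto
    also have "(\<Sum>t\<in>{..<length ms} - {?s}. X t) = 0" using X0 by (intro sum.neutral) blast
    finally have QX: "Q_coef c0 ms i j = X ?s" using Q by simp
    show ?thesis
    proof (cases "j \<in> Pb c0 ms ?s")
      case True
      have jb: "blk c0 ms j = ?s" using blk_eq[OF s(1) True] .
      have "c0 \<le> j" using Pb_le[OF s(1) True] by simp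
      then have R: "Rm c0 ms i j = sgb c0 ms i * sgb c0 ms j / of_nat (ms ! ?s)"
        using jb ic assms unfolding Rm_def by simp
      have XY: "X ?s = Y ?s" using s True by (simp add: X_def)
      show ?thesis unfolding QX XY R
      proof (rule Pb_cases[OF s(2)]; rule Pb_cases[OF True])
        assume a: "i \<in> cls c0 ms (2*?s+1)" "j \<in> cls c0 ms (2*?s+1)"
        then show "Y ?s = (if i = j then 1 else 0) - sgb c0 ms i * sgb c0 ms j / of_nat (ms ! ?s)"
          using sgb1[OF s(1) a(1)] sgb1[OF s(1) a(2)] by (simp add: Y_def)
      next
        assume a: "i \<in> cls c0 ms (2*?s+1)" "j \<in> cls c0 ms (2*?s+2)"
        then show "Y ?s = (if i = j then 1 else 0) - sgb c0 ms i * sgb c0 ms j / of_nat (ms ! ?s)"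
          using sgb1[OF s(1) a(1)] sgb2[OF s(1) a(2)] cls12_disj[OF a(2)] by (auto simp: Y_def)
      next
        assume a: "i \<in> cls c0 ms (2*?s+2)" "j \<in> cls c0 ms (2*?s+1)"
        then show "Y ?s = (if i = j then 1 else 0) - sgb c0 ms i * sgb c0 ms j / of_nat (ms ! ?s)"
          using sgb2[OF s(1) a(1)] sgb1[OF s(1) a(2)] cls12_disj[OF a(1)] by (auto simp: Y_def)
      next
        assume a: "i \<in> cls c0 ms (2*?s+2)" "j \<in> cls c0 ms (2*?s+2)"
        then show "Y ?s = (if i = j then 1 else 0) - sgb c0 ms i * sgb c0 ms j / of_nat (ms ! ?s)"
          using sgb2[OF s(1) a(1)] sgb2[OF s(1) a(2)] cls12_disj[OF a(1)] cls12_disj[OF a(2)]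
          by (simp add: Y_def)
      qed
    next
      case False
      have "Rm c0 ms i j = 0"
      proof (rule ccontr)
        assume "Rm c0 ms i j \<noteq> 0"
        then have "c0 \<le> j" "j < c0 + 2 * sum_list ms" "blk c0 ms j = ?s"
          unfolding Rm_def by (auto split: if_splits)
        then show False using blk_in(2)[of c0 j ms] False by simp
      qed
      moreover have "i \<noteq> j" using s False by auto
      moreover have "X ?s = 0" using False by (simp add: X_def)
      ultimately show ?thesis using QX by simp
    qed
  qed
qed



lemma divmod_blk: fixes k d K :: nat assumes "k*d \<le> K" "K < k*d+d"
  shows "K div d = k" "K mod d = K - k*d"
proof -
  define r where "r = K - k*d"
  have r1: "K = k*d + r" using assms(1) unfolding r_def by simp
  have r2: "r < d" using assms unfolding r_def by linarith
  have "(k*d + r) div d = k" using r2 by simp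
  then show "K div d = k" using r1 by simp
  have "(k*d + r) mod d = r" using r2 by simp
  then show "K mod d = K - k*d" using r1 by simp
qed

lemma mult_left:
  fixes c :: "nat \<Rightarrow> nat \<Rightarrow> complex" and bb :: "nat \<Rightarrow> nat \<Rightarrow> nat \<Rightarrow> nat \<Rightarrow> complex"
  assumes "0 < d"
  shows "mat (n*d) (n*d) (\<lambda>(I,K). c (I div d) (K div d) * (if I mod d = K mod d then 1 else 0))
       * mat (n*d) (n*d) (\<lambda>(K,J). bb (K div d) (J div d) (K mod d) (J mod d))
     = mat (n*d) (n*d) (\<lambda>(I,J). \<Sum>k<n. c (I div d) k * bb k (J div d) (I mod d) (J mod d))"
    (is "?A * ?B = ?C")
proof (rule eq_matI)
  fix I J assume I: "I < dim_row ?C" and J: "J < dim_col ?C"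
  let ?g = "\<lambda>K. c (I div d) (K div d) * (if I mod d = K mod d then 1 else 0) * bb (K div d) (J div d) (K mod d) (J mod d)"
  have "(?A * ?B) $$ (I, J) = (\<Sum>K\<in>{0..<n*d}. ?g K)"
    using I J by (simp add: scalar_prod_def)
  also have "\<dots> = (\<Sum>k<n. \<Sum>K\<in>{k*d..<k*d+d}. ?g K)"
    by (simp add: atLeast0LessThan sum.nat_group)
  also have "\<dots> = (\<Sum>k<n. c (I div d) k * bb k (J div d) (I mod d) (J mod d))"
  proof (rule sum.cong[OF refl])
    fix k
    have "(\<Sum>K\<in>{k*d..<k*d+d}. ?g K) = (\<Sum>K\<in>{k*d..<k*d+d}. if K = k*d + I mod d then c (I div d) k * bb k (J div d) (I mod d) (J mod d) else 0)"
    proof (rule sum.cong[OF refl])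
      fix K assume K: "K \<in> {k*d..<k*d+d}"
      then have dm: "K div d = k" "K mod d = K - k*d" using divmod_blk[of k d K] by auto
      show "?g K = (if K = k*d + I mod d then c (I div d) k * bb k (J div d) (I mod d) (J mod d) else 0)"
        using K dm by auto
    qed
    also have "\<dots> = c (I div d) k * bb k (J div d) (I mod d) (J mod d)"
      using assms by (simp add: sum.delta)
    finally show "(\<Sum>K\<in>{k*d..<k*d+d}. ?g K) = c (I div d) k * bb k (J div d) (I mod d) (J mod d)" .
  qed
  also have "\<dots> = ?C $$ (I, J)" using I J by simp
  finally show "(?A * ?B) $$ (I, J) = ?C $$ (I, J)" .
qed auto

lemma mult_right:
  fixes c :: "nat \<Rightarrow> nat \<Rightarrow> complex" and bb :: "nat \<Rightarrow> nat \<Rightarrow> nat \<Rightarrow> nat \<Rightarrow> complex"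
  assumes "0 < d"
  shows "mat (n*d) (n*d) (\<lambda>(I,K). bb (I div d) (K div d) (I mod d) (K mod d))
       * mat (n*d) (n*d) (\<lambda>(K,J). c (K div d) (J div d) * (if K mod d = J mod d then 1 else 0))
     = mat (n*d) (n*d) (\<lambda>(I,J). \<Sum>l<n. bb (I div d) l (I mod d) (J mod d) * c l (J div d))"
    (is "?A * ?B = ?C")
proof (rule eq_matI)
  fix I J assume I: "I < dim_row ?C" and J: "J < dim_col ?C"
  let ?g = "\<lambda>K. bb (I div d) (K div d) (I mod d) (K mod d) * (c (K div d) (J div d) * (if K mod d = J mod d then 1 else 0))"
  have "(?A * ?B) $$ (I, J) = (\<Sum>K\<in>{0..<n*d}. ?g K)"
    using I J by (simp add: scalar_prod_def)
  also have "\<dots> = (\<Sum>k<n. \<Sum>K\<in>{k*d..<k*d+d}. ?g K)"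
    by (simp add: atLeast0LessThan sum.nat_group)
  also have "\<dots> = (\<Sum>k<n. bb (I div d) k (I mod d) (J mod d) * c k (J div d))"
  proof (rule sum.cong[OF refl])
    fix k
    have "(\<Sum>K\<in>{k*d..<k*d+d}. ?g K) = (\<Sum>K\<in>{k*d..<k*d+d}. if K = k*d + J mod d then bb (I div d) k (I mod d) (J mod d) * c k (J div d) else 0)"
    proof (rule sum.cong[OF refl])
      fix K assume K: "K \<in> {k*d..<k*d+d}"
      then have dm: "K div d = k" "K mod d = K - k*d" using divmod_blk[of k d K] by auto
      show "?g K = (if K = k*d + J mod d then bb (I div d) k (I mod d) (J mod d) * c k (J div d) else 0)"
        using K dm by auto
    qed
    also have "\<dots> = bb (I div d) k (I mod d) (J mod d) * c k (J div d)"
      using assms by (simp add: sum.delta)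
    finally show "(\<Sum>K\<in>{k*d..<k*d+d}. ?g K) = bb (I div d) k (I mod d) (J mod d) * c k (J div d)" .
  qed
  also have "\<dots> = ?C $$ (I, J)" using I J by simp
  finally show "(?A * ?B) $$ (I, J) = ?C $$ (I, J)" .
qed auto



definition valo :: "('g \<Rightarrow> complex mat) \<Rightarrow> 'g option \<Rightarrow> nat \<Rightarrow> nat \<Rightarrow> complex" where
  "valo rho x a b = (case x of None \<Rightarrow> 0 | Some g \<Rightarrow> rho g $$ (a,b))"

lemma emb_apply: "emb x h = (if x = Some h then 1 else 0)"
  by (cases x) (auto simp: emb_def delta_def)

lemma pi_cg_sum:
  assumes fin: "finite W" and car: "\<forall>w\<in>W. set_option (x w) \<subseteq> carrier G" and ab: "a < d" "b < d"
  shows "pi_cg G d rho (\<lambda>h. \<Sum>w\<in>W. emb (x w) h) $$ (a,b) = (\<Sum>w\<in>W. valo rho (x w) a b)"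
proof -
  let ?y = "\<lambda>h. \<Sum>w\<in>W. emb (x w) h"
  define S where "S = {g. \<exists>w\<in>W. x w = Some g}"
  have "S \<subseteq> (\<lambda>w. the (x w)) ` W" unfolding S_def by force
  then have finS: "finite S" using fin finite_surj by blast
  have Scar: "S \<subseteq> carrier G" using car unfolding S_def by force
  have sub: "{g\<in>carrier G. ?y g \<noteq> 0} \<subseteq> S"
  proof
    fix g assume "g \<in> {g\<in>carrier G. ?y g \<noteq> 0}"
    then have "?y g \<noteq> 0" by simp
    then obtain w where "w \<in> W" "emb (x w) g \<noteq> 0"
      by (meson sum.neutral)
    then show "g \<in> S" unfolding S_def by (auto simp: emb_apply split: if_splits)
  qed
  have "pi_cg G d rho ?y $$ (a,b) = (\<Sum>g\<in>{g\<in>carrier G. ?y g \<noteq> 0}. ?y g * rho g $$ (a,b))"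
    unfolding pi_cg_def using ab by simp
  also have "\<dots> = (\<Sum>g\<in>S. ?y g * rho g $$ (a,b))"
    by (rule sum.mono_neutral_left[OF finS sub]) (use Scar in auto)
  also have "\<dots> = (\<Sum>g\<in>S. \<Sum>w\<in>W. emb (x w) g * rho g $$ (a,b))"
    by (simp add: sum_distrib_right)
  also have "\<dots> = (\<Sum>w\<in>W. \<Sum>g\<in>S. emb (x w) g * rho g $$ (a,b))"
    by (rule sum.swap)
  also have "\<dots> = (\<Sum>w\<in>W. valo rho (x w) a b)"
  proof (rule sum.cong[OF refl])
    fix w assume w: "w \<in> W"
    show "(\<Sum>g\<in>S. emb (x w) g * rho g $$ (a,b)) = valo rho (x w) a b"
    proof (cases "x w")
      case None
      then show ?thesis by (simp add: emb_apply valo_def)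
    next
      case (Some g0)
      then have "g0 \<in> S" using w unfolding S_def by auto
      have "(\<Sum>g\<in>S. emb (x w) g * rho g $$ (a,b)) = (\<Sum>g\<in>S. if g0 = g then rho g $$ (a,b) else 0)"
        using Some by (intro sum.cong) (auto simp: emb_apply)
      also have "\<dots> = rho g0 $$ (a,b)" using finS \<open>g0 \<in> S\<close> by (simp add: sum.delta)
      finally show ?thesis using Some by (simp add: valo_def)
    qed
  qed
  finally show ?thesis .
qed

lemma pi_cg_emb:
  assumes "set_option x \<subseteq> carrier G" "a < d" "b < d"
  shows "pi_cg G d rho (emb x) $$ (a,b) = valo rho x a b"
proof -
  have "emb x = (\<lambda>h. \<Sum>w\<in>{0::nat}. emb ((\<lambda>_. x) w) h)" by simp
  then show ?thesis using pi_cg_sum[of "{0::nat}" "\<lambda>_. x" G a d b rho] assms by simp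
qed

lemma pi_cg_Q:
  assumes "\<one>\<^bsub>G\<^esub> \<in> carrier G" "a < d" "b < d"
  shows "pi_cg G d rho (cg_smult c (delta \<one>\<^bsub>G\<^esub>)) $$ (a,b) = c * rho \<one>\<^bsub>G\<^esub> $$ (a,b)"
proof (cases "c = 0")
  case True
  then show ?thesis using assms by (simp add: pi_cg_def cg_smult_def)
next
  case False
  then have "{g \<in> carrier G. cg_smult c (delta \<one>\<^bsub>G\<^esub>) g \<noteq> 0} = {\<one>\<^bsub>G\<^esub>}"
    using assms by (auto simp: cg_smult_def delta_def)
  then show ?thesis using assms by (simp add: pi_cg_def cg_smult_def delta_def)
qed

lemma allsame:
  assumes fin: "finite W" and m: "card W = m" "m \<ge> 1"
    and eq: "(\<lambda>h. \<Sum>w\<in>W. emb (x w) h) = cg_smult (of_nat m) (emb g)" and w: "w \<in> W"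
  shows "x w = g"
proof -
  have cnt: "(\<Sum>w\<in>W. emb (x w) h) = of_nat (card {w\<in>W. x w = Some h})" for h
    using fin by (simp add: emb_apply sum.inter_filter[symmetric])
  have e: "of_nat (card {w\<in>W. x w = Some h}) = (of_nat m :: complex) * emb g h" for h
    using fun_cong[OF eq, of h] cnt[of h] by (simp add: cg_smult_def)
  show ?thesis
  proof (cases g)
    case None
    show ?thesis
    proof (rule ccontr)
      assume "x w \<noteq> g"
      then obtain h where h: "x w = Some h" using None by auto
      have "card {w\<in>W. x w = Some h} = 0" using e[of h] None by (simp add: emb_def)
      moreover have "w \<in> {w\<in>W. x w = Some h}" using w h by simp
      moreover have "finite {w\<in>W. x w = Some h}" using fin by simp
      ultimately show False by (metis card_gt_0_iff less_irrefl empty_iff)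
    qed
  next
    case (Some g0)
    have "card {w\<in>W. x w = Some g0} = card W" using e[of g0] Some m by (simp add: emb_def delta_def)
    then have "{w\<in>W. x w = Some g0} = W" using fin by (intro card_subset_eq) auto
    then show ?thesis using w Some by blast
  qed
qed



lemma Sg_lin: "Sg c0 ms s (\<lambda>k. h1 k - h2 k) = Sg c0 ms s h1 - Sg c0 ms s h2"
  by (simp add: Sg_def sum_subtractf)

lemma Sg_scale: "Sg c0 ms s (\<lambda>k. c * h k) = c * Sg c0 ms s h"
  by (simp add: Sg_def sum_distrib_left right_diff_distrib)

lemma Sg_cnj: "Sg c0 ms s (\<lambda>k. cnj (h k)) = cnj (Sg c0 ms s h)"
  by (simp add: Sg_def)

lemma Sg_cong: assumes "\<And>k. k \<in> Pb c0 ms s \<Longrightarrow> h k = h' k"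
  shows "Sg c0 ms s h = Sg c0 ms s h'"
proof -
  have "sum h (cls c0 ms (2*s+1)) = sum h' (cls c0 ms (2*s+1))"
    using assms cls_union[of c0 ms s] by (intro sum.cong) auto
  moreover have "sum h (cls c0 ms (2*s+2)) = sum h' (cls c0 ms (2*s+2))"
    using assms cls_union[of c0 ms s] by (intro sum.cong) auto
  ultimately show ?thesis by (simp add: Sg_def)
qed

lemma card_cls1: "card (cls c0 ms (2*s+1)) = ms ! s" unfolding cls1 by simp
lemma card_cls2: "card (cls c0 ms (2*s+2)) = ms ! s" unfolding cls2 by simp
lemma card_cls1s: "card (cls c0 ms (Suc (2*s))) = ms ! s" unfolding cls1s by simp
lemma card_cls2s: "card (cls c0 ms (Suc (Suc (2*s)))) = ms ! s" unfolding cls2s by simp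

lemma Sg_sgb: assumes "s < length ms"
  shows "Sg c0 ms s (\<lambda>k. sgb c0 ms k * c) = 2 * of_nat (ms ! s) * c"
proof -
  have "(\<Sum>k\<in>cls c0 ms (2*s+1). sgb c0 ms k * c) = (\<Sum>k\<in>cls c0 ms (2*s+1). c)"
    using sgb1[OF assms] by (intro sum.cong) auto
  moreover have "(\<Sum>k\<in>cls c0 ms (2*s+2). sgb c0 ms k * c) = (\<Sum>k\<in>cls c0 ms (2*s+2). - c)"
    using sgb2[OF assms] by (intro sum.cong) auto
  ultimately show ?thesis unfolding Sg_def by (simp add: card_cls1s card_cls2s sum_negf)
qed

lemma Sg_swap: "Sg c0 ms s (\<lambda>k. Sg c0 ms t (\<lambda>l. h k l)) = Sg c0 ms t (\<lambda>l. Sg c0 ms s (\<lambda>k. h k l))"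
proof -
  have e: "(\<Sum>k\<in>A. \<Sum>l\<in>B. h k l) = (\<Sum>l\<in>B. \<Sum>k\<in>A. h k l)" for A B by (rule sum.swap)
  show ?thesis unfolding Sg_def sum_subtractf e by (simp add: algebra_simps)
qed

lemma Sg_delta: assumes "s < length ms"
  shows "Sg c0 ms s (\<lambda>k. if k = j then 1 else 0) = (if j \<in> Pb c0 ms s then sgb c0 ms j else 0)"
proof (cases "j \<in> Pb c0 ms s")
  case True
  then show ?thesis
  proof (rule Pb_cases)
    assume j: "j \<in> cls c0 ms (2*s+1)"
    then show ?thesis using True sgb1[OF assms j] cls12_disj[of j c0 ms s] finite_cls[of c0 ms]
      unfolding Sg_def by (auto simp: sum.delta')
  next
    assume j: "j \<in> cls c0 ms (2*s+2)"
    then show ?thesis using True sgb2[OF assms j] cls12_disj[of j c0 ms s] finite_cls[of c0 ms]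
      unfolding Sg_def by (auto simp: sum.delta')
  qed
next
  case False
  then have "j \<notin> cls c0 ms (2*s+1)" "j \<notin> cls c0 ms (2*s+2)" using cls_union[of c0 ms s] by auto
  then show ?thesis using False finite_cls[of c0 ms] unfolding Sg_def by (simp add: sum.delta')
qed

lemma expand:
  fixes f :: "nat \<Rightarrow> nat \<Rightarrow> complex"
  assumes N: "N = c0 + 2 * sum_list ms" and i: "i < N" and j: "j < N"
  shows "(\<Sum>l<N. (\<Sum>k<N. Q_coef c0 ms i k * f k l) * Q_coef c0 ms l j)
    = f i j - (\<Sum>k<N. Rm c0 ms i k * f k j) - (\<Sum>l<N. f i l * Rm c0 ms l j)
      + (\<Sum>l<N. (\<Sum>k<N. Rm c0 ms i k * f k l) * Rm c0 ms l j)"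
proof -
  define X where "X l = (\<Sum>k<N. Rm c0 ms i k * f k l)" for l
  have A: "(\<Sum>k<N. Q_coef c0 ms i k * f k l) = f i l - X l" for l
  proof -
    have "(\<Sum>k<N. Q_coef c0 ms i k * f k l) = (\<Sum>k<N. (if i = k then f k l else 0) - Rm c0 ms i k * f k l)"
      using Q_coef_eq[of i c0 ms] i N by (intro sum.cong) (auto simp: left_diff_distrib)
    also have "\<dots> = f i l - X l" using i by (simp add: sum_subtractf X_def)
    finally show ?thesis .
  qed
  have "(\<Sum>l<N. (\<Sum>k<N. Q_coef c0 ms i k * f k l) * Q_coef c0 ms l j)
     = (\<Sum>l<N. (if l = j then f i l - X l else 0) - (f i l * Rm c0 ms l j - X l * Rm c0 ms l j))"
  proof (rule sum.cong[OF refl])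
    fix l assume "l \<in> {..<N}"
    then have q: "Q_coef c0 ms l j = (if l = j then 1 else 0) - Rm c0 ms l j"
      using Q_coef_eq[of l c0 ms j] j N by simp
    show "(\<Sum>k<N. Q_coef c0 ms i k * f k l) * Q_coef c0 ms l j
       = (if l = j then f i l - X l else 0) - (f i l * Rm c0 ms l j - X l * Rm c0 ms l j)"
      unfolding A q by (cases "l = j") (simp_all add: algebra_simps)
  qed
  also have "\<dots> = f i j - X j - ((\<Sum>l<N. f i l * Rm c0 ms l j) - (\<Sum>l<N. X l * Rm c0 ms l j))"
    using j by (simp add: sum_subtractf)
  finally show ?thesis by (simp add: X_def)
qed

lemma QQ_sum:
  assumes N: "N = c0 + 2 * sum_list ms" and i: "i < N" and j: "j < N" and mp: "\<forall>m\<in>set ms. m \<ge> 1"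
  shows "(\<Sum>k<N. Q_coef c0 ms i k * Q_coef c0 ms k j) = (if i = j then 1 else 0)"
proof -
  have "(\<Sum>k<N. Q_coef c0 ms i k * Q_coef c0 ms k j)
     = (\<Sum>k<N. (if i = k then Q_coef c0 ms k j else 0) - Rm c0 ms i k * Q_coef c0 ms k j)"
    using Q_coef_eq[of i c0 ms] i N by (intro sum.cong) (auto simp: left_diff_distrib)
  also have "\<dots> = Q_coef c0 ms i j - (\<Sum>k<N. Rm c0 ms i k * Q_coef c0 ms k j)"
    using i by (simp add: sum_subtractf)
  finally have e: "(\<Sum>k<N. Q_coef c0 ms i k * Q_coef c0 ms k j) = Q_coef c0 ms i j - (\<Sum>k<N. Rm c0 ms i k * Q_coef c0 ms k j)" .
  have qij: "Q_coef c0 ms i j = (if i = j then 1 else 0) - Rm c0 ms i j" using Q_coef_eq i j N by blast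
  show ?thesis
  proof (cases "i < c0")
    case True
    then show ?thesis using e qij by (simp add: Rm_lt)
  next
    case False
    let ?s = "blk c0 ms i"
    have s: "?s < length ms" "i \<in> Pb c0 ms ?s" using blk_in[of c0 i ms] False i N by auto
    have sR: "(\<Sum>k<N. Rm c0 ms i k * Q_coef c0 ms k j) = sgb c0 ms i / of_nat (ms ! ?s) * Sg c0 ms ?s (\<lambda>k. Q_coef c0 ms k j)"
      using sum_R_left[of c0 i ms] False i N by simp
    show ?thesis
    proof (cases "j \<in> Pb c0 ms ?s")
      case True
      have jb: "blk c0 ms j = ?s" using blk_eq[OF s(1) True] .
      have "c0 \<le> j" using Pb_le[OF s(1) True] by simp
      then have R: "Rm c0 ms i j = sgb c0 ms i * sgb c0 ms j / of_nat (ms ! ?s)"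
        using jb False i j N unfolding Rm_def by simp
      have "Sg c0 ms ?s (\<lambda>k. Q_coef c0 ms k j) = Sg c0 ms ?s (\<lambda>k. (if k = j then 1 else 0) - sgb c0 ms k * (sgb c0 ms j / of_nat (ms ! ?s)))"
      proof (rule Sg_cong)
        fix k assume k: "k \<in> Pb c0 ms ?s"
        have "c0 \<le> k" "k < N" "blk c0 ms k = ?s" using Pb_le[OF s(1) k] blk_eq[OF s(1) k] N by auto
        then show "Q_coef c0 ms k j = (if k = j then 1 else 0) - sgb c0 ms k * (sgb c0 ms j / of_nat (ms ! ?s))"
          using Q_coef_eq[of k c0 ms j] j N jb \<open>c0 \<le> j\<close> unfolding Rm_def by simp
      qed
      also have "\<dots> = sgb c0 ms j - 2 * sgb c0 ms j"
      proof -
        have m: "ms ! ?s \<ge> 1" using mp s(1) by simp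
        show ?thesis unfolding Sg_lin Sg_delta[OF s(1)] Sg_sgb[OF s(1)] using True m by simp
      qed
      finally show ?thesis using e qij sR R by (simp add: field_simps)
    next
      case jn: False
      have "Sg c0 ms ?s (\<lambda>k. Q_coef c0 ms k j) = Sg c0 ms ?s (\<lambda>k. 0)"
      proof (rule Sg_cong)
        fix k assume k: "k \<in> Pb c0 ms ?s"
        have kk: "c0 \<le> k" "k < N" "blk c0 ms k = ?s" using Pb_le[OF s(1) k] blk_eq[OF s(1) k] N by auto
        have "Rm c0 ms k j = 0"
        proof (rule ccontr)
          assume "Rm c0 ms k j \<noteq> 0"
          then have "c0 \<le> j" "j < c0 + 2 * sum_list ms" "blk c0 ms j = ?s"
            using kk unfolding Rm_def by (auto split: if_splits)
          then show False using blk_in(2)[of c0 j ms] jn by simp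
        qed
        moreover have "k \<noteq> j" using k jn by auto
        ultimately show "Q_coef c0 ms k j = 0" using Q_coef_eq[of k c0 ms j] kk j N by simp
      qed
      also have "\<dots> = 0" by (simp add: Sg_def)
      finally have "Sg c0 ms ?s (\<lambda>k. Q_coef c0 ms k j) = 0" .
      moreover have "Rm c0 ms i j = 0"
      proof (rule ccontr)
        assume "Rm c0 ms i j \<noteq> 0"
        then have "c0 \<le> j" "j < c0 + 2 * sum_list ms" "blk c0 ms j = ?s"
          unfolding Rm_def by (auto split: if_splits)
        then show False using blk_in(2)[of c0 j ms] jn by simp
      qed
      moreover have "i \<noteq> j" using s jn by auto
      ultimately show ?thesis using e qij sR by simp
    qed
  qed
qed



locale wq =
  fixes G :: "('g, 'b) monoid_scheme" and d c0 n :: nat and ms :: "nat list"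
    and gam :: "nat \<Rightarrow> nat \<Rightarrow> 'g option" and rho :: "'g \<Rightarrow> complex mat"
  assumes grp: "group G"
    and nd: "n = c0 + 2 * sum_list ms"
    and mpos: "\<forall>m\<in>set ms. m \<ge> 1"
    and gg: "gain_graph G n gam"
    and ur: "unitary_rep G d rho"
    and wqh: "pi_WQH G d rho c0 ms gam"
begin

lemma one_car: "\<one>\<^bsub>G\<^esub> \<in> carrier G" using grp by (simp add: group.is_monoid monoid.one_closed)

lemma rho_car: "g \<in> carrier G \<Longrightarrow> rho g \<in> carrier_mat d d"
  using ur by (simp add: unitary_rep_def)

lemma rho_unit: "g \<in> carrier G \<Longrightarrow> rho g * conj_transpose (rho g) = 1\<^sub>m d"
  using ur by (simp add: unitary_rep_def)

lemma rho_mult: "g \<in> carrier G \<Longrightarrow> h \<in> carrier G \<Longrightarrow> rho (g \<otimes>\<^bsub>G\<^esub> h) = rho g * rho h"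
  using ur by (simp add: unitary_rep_def)

lemma ct_car: "U \<in> carrier_mat d d \<Longrightarrow> conj_transpose U \<in> carrier_mat d d"
  by (simp add: conj_transpose_def)

lemma rho_one: "rho \<one>\<^bsub>G\<^esub> = 1\<^sub>m d"
proof -
  let ?A = "rho \<one>\<^bsub>G\<^esub>" let ?C = "conj_transpose ?A"
  have A: "?A \<in> carrier_mat d d" using rho_car one_car by blast
  have C: "?C \<in> carrier_mat d d" using ct_car[OF A] .
  have AA: "?A * ?A = ?A" using rho_mult[OF one_car one_car] grp
    by (simp add: group.is_monoid monoid.l_one one_car)
  have "?A = ?A * (?A * ?C)" using rho_unit[OF one_car] A by simp
  also have "\<dots> = (?A * ?A) * ?C" using A C by simp
  also have "\<dots> = 1\<^sub>m d" using AA rho_unit[OF one_car] by simp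
  finally show ?thesis .
qed

lemma rho_inv: assumes g: "g \<in> carrier G" shows "rho (inv\<^bsub>G\<^esub> g) = conj_transpose (rho g)"
proof -
  have ig: "inv\<^bsub>G\<^esub> g \<in> carrier G" using grp g by (simp add: group.inv_closed)
  let ?B = "rho (inv\<^bsub>G\<^esub> g)" let ?A = "rho g" let ?C = "conj_transpose (rho g)"
  have A: "?A \<in> carrier_mat d d" using rho_car g by blast
  have B: "?B \<in> carrier_mat d d" using rho_car ig by blast
  have C: "?C \<in> carrier_mat d d" using ct_car[OF A] .
  have BA: "?B * ?A = 1\<^sub>m d" using rho_mult[OF ig g] grp g rho_one
    by (simp add: group.l_inv)
  have "?C = (?B * ?A) * ?C" using BA C by simp
  also have "\<dots> = ?B * (?A * ?C)" using A B C by simp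
  also have "\<dots> = ?B" using rho_unit[OF g] B by simp
  finally show ?thesis by simp
qed

lemma valo_inv: assumes "set_option x \<subseteq> carrier G" "a < d" "b < d"
  shows "valo rho (map_option (\<lambda>g. inv\<^bsub>G\<^esub> g) x) a b = cnj (valo rho x b a)"
proof (cases x)
  case None then show ?thesis by (simp add: valo_def)
next
  case (Some g)
  then have g: "g \<in> carrier G" using assms by simp
  have A: "rho g \<in> carrier_mat d d" using rho_car g by blast
  show ?thesis using Some rho_inv[OF g] A assms by (simp add: valo_def conj_transpose_def)
qed

lemma gam_car: "set_option (gam v w) \<subseteq> carrier G"
  using gg unfolding gain_graph_def by (cases "gam v w") auto

lemma gam_sym: "gam k j = map_option (\<lambda>g. inv\<^bsub>G\<^esub> g) (gam j k)"
proof (cases "gam j k")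
  case None
  show ?thesis
  proof (cases "gam k j")
    case (Some h)
    then have "gam j k = Some (inv\<^bsub>G\<^esub> h)" using gg unfolding gain_graph_def by blast
    then show ?thesis using None by simp
  qed (simp add: None)
next
  case (Some g)
  then show ?thesis using gg unfolding gain_graph_def by auto
qed

lemma f_herm: "a < d \<Longrightarrow> b < d \<Longrightarrow> valo rho (gam k j) a b = cnj (valo rho (gam j k) b a)"
  using valo_inv[OF gam_car, of a b j k] gam_sym[of k j] by simp

lemma Psi_val: "a < d \<Longrightarrow> b < d \<Longrightarrow>
  pi_cg G d rho (Psi c0 ms gam j v) $$ (a,b) = (\<Sum>w\<in>cls c0 ms j. valo rho (gam v w) a b)"
  unfolding Psi_def by (rule pi_cg_sum) (use gam_car finite_cls in auto)

lemma Sg_pi: "a < d \<Longrightarrow> b < d \<Longrightarrow> Sg c0 ms t (\<lambda>l. valo rho (gam v l) a b)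
   = pi_cg G d rho (Psi c0 ms gam (2*t+1) v) $$ (a,b) - pi_cg G d rho (Psi c0 ms gam (2*t+2) v) $$ (a,b)"
  by (simp add: Psi_val Sg_def)

lemma m_pos: "s < length ms \<Longrightarrow> ms ! s \<ge> 1" using mpos by simp

lemma offs_in: "s < length ms \<Longrightarrow> offs c0 ms s \<in> cls c0 ms (2*s+1)"
  using m_pos[of s] unfolding cls1 by simp

lemma row_const:
  assumes s: "s < length ms" and t: "t < length ms" and k: "k \<in> Pb c0 ms s" and ab: "a < d" "b < d"
  shows "Sg c0 ms t (\<lambda>l. valo rho (gam k l) a b) = sgb c0 ms k * Sg c0 ms t (\<lambda>l. valo rho (gam (offs c0 ms s) l) a b)"
  using k
proof (rule Pb_cases)
  assume k1: "k \<in> cls c0 ms (2*s+1)"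
  have r: "2*s+1 \<in> {1..2 * length ms}" "2*t+1 \<in> {1..2 * length ms}" "2*t+2 \<in> {1..2 * length ms}"
    using s t by auto
  have "pi_cg G d rho (Psi c0 ms gam (2*t+1) k) = pi_cg G d rho (Psi c0 ms gam (2*t+1) (offs c0 ms s))"
       "pi_cg G d rho (Psi c0 ms gam (2*t+2) k) = pi_cg G d rho (Psi c0 ms gam (2*t+2) (offs c0 ms s))"
    using wqh r k1 offs_in[OF s] unfolding pi_WQH_def by blast+
  then show ?thesis using Sg_pi[OF ab] sgb1[OF s k1] by simp
next
  assume k2: "k \<in> cls c0 ms (2*s+2)"
  have "pi_cg G d rho (Psi c0 ms gam (2*t+1) (offs c0 ms s)) = pi_cg G d rho (Psi c0 ms gam (2*t+2) k) \<and>
        pi_cg G d rho (Psi c0 ms gam (2*t+2) (offs c0 ms s)) = pi_cg G d rho (Psi c0 ms gam (2*t+1) k)"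
    using wqh s t k2 offs_in[OF s] unfolding pi_WQH_def by blast
  then show ?thesis using Sg_pi[OF ab] sgb2[OF s k2] by simp
qed

lemma col_const:
  assumes s: "s < length ms" and t: "t < length ms" and l: "l \<in> Pb c0 ms t" and ab: "a < d" "b < d"
  shows "Sg c0 ms s (\<lambda>k. valo rho (gam k l) a b) = sgb c0 ms l * Sg c0 ms s (\<lambda>k. valo rho (gam k (offs c0 ms t)) a b)"
proof -
  have "Sg c0 ms s (\<lambda>k. valo rho (gam k l) a b) = cnj (Sg c0 ms s (\<lambda>k. valo rho (gam l k) b a))"
    using f_herm[OF ab] by (simp add: Sg_cnj[symmetric])
  also have "\<dots> = cnj (sgb c0 ms l * Sg c0 ms s (\<lambda>k. valo rho (gam (offs c0 ms t) k) b a))"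
    using row_const[OF t s l ab(2) ab(1)] by simp
  also have "\<dots> = sgb c0 ms l * Sg c0 ms s (\<lambda>k. valo rho (gam k (offs c0 ms t)) a b)"
    using f_herm[OF ab] by (simp add: Sg_cnj[symmetric] cnj_sgb)
  finally show ?thesis .
qed

end


context wq begin

lemma newgain:
  assumes i: "i < c0" and j: "c0 \<le> j" "j < n" and ab: "a < d" "b < d"
  shows "set_option (new_gain G c0 ms gam i j) \<subseteq> carrier G \<and>
    valo rho (new_gain G c0 ms gam i j) a b = valo rho (gam i j) a b
      - sgb c0 ms j / of_nat (ms ! blk c0 ms j) * Sg c0 ms (blk c0 ms j) (\<lambda>l. valo rho (gam i l) a b)"
proof -
  define t where "t = blk c0 ms j"
  have t: "t < length ms" "j \<in> Pb c0 ms t" using blk_in[of c0 j ms] j nd unfolding t_def by auto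
  have m: "ms ! t \<ge> 1" using m_pos[OF t(1)] .
  have Sg: "Sg c0 ms t (\<lambda>l. valo rho (gam i l) a b)
   = pi_cg G d rho (Psi c0 ms gam (2*t+1) i) $$ (a,b) - pi_cg G d rho (Psi c0 ms gam (2*t+2) i) $$ (a,b)"
    using Sg_pi[OF ab] .
  show ?thesis
  proof (cases "Psi c0 ms gam (2*t+1) i = Psi c0 ms gam (2*t+2) i")
    case True
    have "new_gain G c0 ms gam i j = gam i j"
      unfolding new_gain_def Let_def t_def[symmetric] using True by simp
    then show ?thesis using True Sg gam_car unfolding t_def by simp
  next
    case False
    have "i \<in> cls c0 ms 0" using i by (simp add: cls0)
    then have ex: "\<exists>g1 g2. caseb G c0 ms gam t i g1 g2"
      using wqh False t(1) unfolding pi_WQH_def by blast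
    define p where "p = (SOME p. case p of (g1, g2) \<Rightarrow> caseb G c0 ms gam t i g1 g2)"
    have "case p of (g1, g2) \<Rightarrow> caseb G c0 ms gam t i g1 g2"
      unfolding p_def by (rule someI_ex) (use ex in auto)
    then have cb: "caseb G c0 ms gam t i (fst p) (snd p)" by (simp add: case_prod_beta)
    have ng: "new_gain G c0 ms gam i j = (if j \<in> cls c0 ms (2*t+1) then snd p else fst p)"
      unfolding new_gain_def Let_def t_def[symmetric] p_def[symmetric] using False
      by (simp add: case_prod_beta)
    have car: "set_option (fst p) \<subseteq> carrier G" "set_option (snd p) \<subseteq> carrier G"
      using cb unfolding caseb_def by auto
    have all1: "gam i w = fst p" if "w \<in> cls c0 ms (2*t+1)" for w
      using cb that m unfolding caseb_def Psi_def
      by (intro allsame[of "cls c0 ms (2*t+1)" "ms ! t" "\<lambda>w. gam i w"]) (auto simp: finite_cls card_cls1 card_cls1s)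
    have all2: "gam i w = snd p" if "w \<in> cls c0 ms (2*t+2)" for w
      using cb that m unfolding caseb_def Psi_def
      by (intro allsame[of "cls c0 ms (2*t+2)" "ms ! t" "\<lambda>w. gam i w"]) (auto simp: finite_cls card_cls2 card_cls2s)
    have "Sg c0 ms t (\<lambda>l. valo rho (gam i l) a b)
        = of_nat (ms ! t) * valo rho (fst p) a b - of_nat (ms ! t) * valo rho (snd p) a b"
    proof -
      have "(\<Sum>l\<in>cls c0 ms (2*t+1). valo rho (gam i l) a b) = (\<Sum>l\<in>cls c0 ms (2*t+1). valo rho (fst p) a b)"
        using all1 by (intro sum.cong) auto
      moreover have "(\<Sum>l\<in>cls c0 ms (2*t+2). valo rho (gam i l) a b) = (\<Sum>l\<in>cls c0 ms (2*t+2). valo rho (snd p) a b)"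
        using all2 by (intro sum.cong) auto
      ultimately show ?thesis unfolding Sg_def by (simp add: card_cls1 card_cls2 card_cls1s card_cls2s)
    qed
    moreover have mne: "(of_nat (ms ! t) :: complex) \<noteq> 0" using m by simp
    ultimately show ?thesis
    proof -
      assume S: "Sg c0 ms t (\<lambda>l. valo rho (gam i l) a b)
        = of_nat (ms ! t) * valo rho (fst p) a b - of_nat (ms ! t) * valo rho (snd p) a b"
      show ?thesis
      proof (rule Pb_cases[OF t(2)])
        assume j1: "j \<in> cls c0 ms (2*t+1)"
        show ?thesis using ng j1 car all1[OF j1] sgb1[OF t(1) j1] S mne unfolding t_def[symmetric]
          by (simp add: field_simps)
      next
        assume j2: "j \<in> cls c0 ms (2*t+2)"
        show ?thesis using ng j2 cls12_disj[OF j2] car all2[OF j2] sgb2[OF t(1) j2] S mne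
          unfolding t_def[symmetric] by (simp add: field_simps)
      qed
    qed
  qed
qed

end


context wq begin

lemma alpha_A: "i < c0 \<Longrightarrow> j < c0 \<Longrightarrow> alpha_graph G c0 ms gam i j = gam i j"
  by (simp add: alpha_graph_def cls0)
lemma alpha_B: "i < c0 \<Longrightarrow> c0 \<le> j \<Longrightarrow> j < n \<Longrightarrow> alpha_graph G c0 ms gam i j = new_gain G c0 ms gam i j"
  by (simp add: alpha_graph_def cls0 nd)
lemma alpha_C: "c0 \<le> i \<Longrightarrow> i < n \<Longrightarrow> j < c0 \<Longrightarrow>
    alpha_graph G c0 ms gam i j = map_option (\<lambda>g. inv\<^bsub>G\<^esub> g) (new_gain G c0 ms gam j i)"
  by (simp add: alpha_graph_def cls0 nd)
lemma alpha_D: "c0 \<le> i \<Longrightarrow> c0 \<le> j \<Longrightarrow> alpha_graph G c0 ms gam i j = gam i j"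
  by (simp add: alpha_graph_def cls0)

lemma alpha_car: assumes "i < n" "j < n" and "0 < d"
  shows "set_option (alpha_graph G c0 ms gam i j) \<subseteq> carrier G"
proof -
  consider "i < c0" "j < c0" | "i < c0" "c0 \<le> j" | "c0 \<le> i" "j < c0" | "c0 \<le> i" "c0 \<le> j" by linarith
  then show ?thesis
  proof cases
    case 1 then show ?thesis using alpha_A gam_car by simp
  next
    case 2 then show ?thesis using alpha_B newgain[of i j 0 0] assms by simp
  next
    case 3
    have "set_option (new_gain G c0 ms gam j i) \<subseteq> carrier G" using newgain[of j i 0 0] assms 3 by simp
    then show ?thesis using alpha_C 3 assms grp by (auto simp: group.inv_closed)
  next
    case 4 then show ?thesis using alpha_D gam_car by simp
  qed
qed

lemma core:
  assumes i: "i < n" and j: "j < n" and ab: "a < d" "b < d"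
  shows "valo rho (alpha_graph G c0 ms gam i j) a b
    = (\<Sum>l<n. (\<Sum>k<n. Q_coef c0 ms i k * valo rho (gam k l) a b) * Q_coef c0 ms l j)"
proof -
  define F where "F k l = valo rho (gam k l) a b" for k l
  have E: "(\<Sum>l<n. (\<Sum>k<n. Q_coef c0 ms i k * valo rho (gam k l) a b) * Q_coef c0 ms l j)
    = F i j - (\<Sum>k<n. Rm c0 ms i k * F k j) - (\<Sum>l<n. F i l * Rm c0 ms l j)
      + (\<Sum>l<n. (\<Sum>k<n. Rm c0 ms i k * F k l) * Rm c0 ms l j)"
    using expand[OF nd i j, of F] unfolding F_def by simp
  consider "i < c0" "j < c0" | "i < c0" "c0 \<le> j" | "c0 \<le> i" "j < c0" | "c0 \<le> i" "c0 \<le> j" by linarith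
  then show ?thesis
  proof cases
    case 1
    then show ?thesis unfolding E using alpha_A by (simp add: Rm_lt F_def)
  next
    case 2
    have T3: "(\<Sum>l<n. F i l * Rm c0 ms l j) = sgb c0 ms j / of_nat (ms ! blk c0 ms j) * Sg c0 ms (blk c0 ms j) (\<lambda>l. F i l)"
      using sum_R_right[of c0 j ms] 2 j nd by simp
    show ?thesis unfolding E T3 using alpha_B[OF 2 j] newgain[OF 2(1) 2(2) j ab] 2
      by (simp add: Rm_lt F_def[abs_def])
  next
    case 3
    let ?s = "blk c0 ms i"
    have T2: "(\<Sum>k<n. Rm c0 ms i k * F k j) = sgb c0 ms i / of_nat (ms ! ?s) * Sg c0 ms ?s (\<lambda>k. F k j)"
      using sum_R_left[of c0 i ms] 3 i nd by simp
    have ng: "set_option (new_gain G c0 ms gam j i) \<subseteq> carrier G \<and>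
      valo rho (new_gain G c0 ms gam j i) b a = valo rho (gam j i) b a
      - sgb c0 ms i / of_nat (ms ! ?s) * Sg c0 ms ?s (\<lambda>l. valo rho (gam j l) b a)"
      using newgain[OF 3(2) 3(1) i ab(2) ab(1)] .
    have L: "valo rho (alpha_graph G c0 ms gam i j) a b = cnj (valo rho (new_gain G c0 ms gam j i) b a)"
      using alpha_C[OF 3(1) i 3(2)] valo_inv[OF conjunct1[OF ng] ab] by simp
    have S: "Sg c0 ms ?s (\<lambda>k. F k j) = cnj (Sg c0 ms ?s (\<lambda>l. valo rho (gam j l) b a))"
      using f_herm[OF ab] by (simp add: F_def Sg_cnj[symmetric])
    have Fij: "F i j = cnj (valo rho (gam j i) b a)" using f_herm[OF ab] by (simp add: F_def)
    show ?thesis unfolding E T2 L using ng S Fij 3 by (simp add: Rm_lt cnj_sgb)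
  next
    case 4
    let ?s = "blk c0 ms i" let ?t = "blk c0 ms j"
    have s: "?s < length ms" "i \<in> Pb c0 ms ?s" using blk_in[of c0 i ms] 4 i nd by auto
    have t: "?t < length ms" "j \<in> Pb c0 ms ?t" using blk_in[of c0 j ms] 4 j nd by auto
    define D where "D = Sg c0 ms ?t (\<lambda>l. F (offs c0 ms ?s) l)"
    define E' where "E' = Sg c0 ms ?s (\<lambda>k. F k (offs c0 ms ?t))"
    define ms' where "ms' = (of_nat (ms ! ?s) :: complex)"
    define mt' where "mt' = (of_nat (ms ! ?t) :: complex)"
    have ms0: "ms' \<noteq> 0" using m_pos[OF s(1)] unfolding ms'_def by simp
    have mt0: "mt' \<noteq> 0" using m_pos[OF t(1)] unfolding mt'_def by simp
    have row: "Sg c0 ms ?t (\<lambda>l. F k l) = sgb c0 ms k * D" if "k \<in> Pb c0 ms ?s" for k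
      using row_const[OF s(1) t(1) that ab] unfolding D_def F_def .
    have col: "Sg c0 ms ?s (\<lambda>k. F k l) = sgb c0 ms l * E'" if "l \<in> Pb c0 ms ?t" for l
      using col_const[OF s(1) t(1) that ab] unfolding E'_def F_def .
    have T2: "(\<Sum>k<n. Rm c0 ms i k * F k j) = sgb c0 ms i / ms' * (sgb c0 ms j * E')"
      using sum_R_left[of c0 i ms] 4 i nd col[OF t(2)] unfolding ms'_def by simp
    have T3: "(\<Sum>l<n. F i l * Rm c0 ms l j) = sgb c0 ms j / mt' * (sgb c0 ms i * D)"
      using sum_R_right[of c0 j ms] 4 j nd row[OF s(2)] unfolding mt'_def by simp
    define Y where "Y = Sg c0 ms ?t (\<lambda>l. Sg c0 ms ?s (\<lambda>k. F k l))"
    have "(\<Sum>l<n. (\<Sum>k<n. Rm c0 ms i k * F k l) * Rm c0 ms l j)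
        = (\<Sum>l<n. (sgb c0 ms i / ms' * Sg c0 ms ?s (\<lambda>k. F k l)) * Rm c0 ms l j)"
      using sum_R_left[of c0 i ms] 4 i nd unfolding ms'_def by simp
    also have "\<dots> = sgb c0 ms j / mt' * Sg c0 ms ?t (\<lambda>l. sgb c0 ms i / ms' * Sg c0 ms ?s (\<lambda>k. F k l))"
    proof -
      have R: "\<And>h. (\<Sum>l<n. h l * Rm c0 ms l j) = sgb c0 ms j / mt' * Sg c0 ms ?t h"
        using sum_R_right[of c0 j ms] 4 j nd unfolding mt'_def by simp
      show ?thesis by (rule R)
    qed
    also have "\<dots> = sgb c0 ms j / mt' * (sgb c0 ms i / ms' * Y)"
      unfolding Y_def by (simp only: Sg_scale)
    finally have T4: "(\<Sum>l<n. (\<Sum>k<n. Rm c0 ms i k * F k l) * Rm c0 ms l j) = sgb c0 ms j / mt' * (sgb c0 ms i / ms' * Y)" .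
    have Y1: "Y = 2 * mt' * E'"
    proof -
      have "Y = Sg c0 ms ?t (\<lambda>l. sgb c0 ms l * E')" unfolding Y_def by (rule Sg_cong) (rule col)
      then show ?thesis using Sg_sgb[OF t(1)] unfolding mt'_def by simp
    qed
    have Y2: "Y = 2 * ms' * D"
    proof -
      have "Y = Sg c0 ms ?s (\<lambda>k. Sg c0 ms ?t (\<lambda>l. F k l))" unfolding Y_def by (rule Sg_swap[symmetric])
      also have "\<dots> = Sg c0 ms ?s (\<lambda>k. sgb c0 ms k * D)" by (rule Sg_cong) (rule row)
      finally show ?thesis using Sg_sgb[OF s(1)] unfolding ms'_def by simp
    qed
    have E'eq: "E' = ms' * D / mt'" using Y1 Y2 mt0 by (simp add: field_simps)
    have fin: "F i j - sgb c0 ms i / ms' * (sgb c0 ms j * E') - sgb c0 ms j / mt' * (sgb c0 ms i * D)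
        + sgb c0 ms j / mt' * (sgb c0 ms i / ms' * Y) = F i j"
      unfolding Y2 E'eq using ms0 mt0 by (simp add: field_simps)
    show ?thesis unfolding E T2 T3 T4 fin using alpha_D[OF 4] by (simp add: F_def)
  qed
qed

end


context wq begin

lemma PQ: assumes d: "0 < d"
  shows "pi_mat G d rho n (Q_alpha G c0 ms)
    = mat (n*d) (n*d) (\<lambda>(I,K). Q_coef c0 ms (I div d) (K div d) * (if I mod d = K mod d then 1 else 0))"
  unfolding pi_mat_def Q_alpha_def
  by (rule eq_matI) (auto simp: pi_cg_Q[OF one_car] rho_one d)

lemma PA: "pi_mat G d rho n (adj_mat gam)
    = mat (n*d) (n*d) (\<lambda>(K,J). pi_cg G d rho (adj_mat gam (K div d) (J div d)) $$ (K mod d, J mod d))"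
  unfolding pi_mat_def ..

lemma main_eq:
  "pi_mat G d rho n (adj_mat (alpha_graph G c0 ms gam))
    = pi_mat G d rho n (Q_alpha G c0 ms) * pi_mat G d rho n (adj_mat gam) * pi_mat G d rho n (Q_alpha G c0 ms)"
proof (cases "d = 0")
  case True
  then show ?thesis by (intro eq_matI) (auto simp: pi_mat_def)
next
  case False
  then have d: "0 < d" by simp
  have M1: "pi_mat G d rho n (Q_alpha G c0 ms) * pi_mat G d rho n (adj_mat gam)
    = mat (n*d) (n*d) (\<lambda>(I,J). \<Sum>k<n. Q_coef c0 ms (I div d) k * pi_cg G d rho (adj_mat gam k (J div d)) $$ (I mod d, J mod d))"
    unfolding PQ[OF d] PA
    by (rule mult_left[OF d, where c="Q_coef c0 ms" and bb="\<lambda>k l a b. pi_cg G d rho (adj_mat gam k l) $$ (a,b)"])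
  have M2: "pi_mat G d rho n (Q_alpha G c0 ms) * pi_mat G d rho n (adj_mat gam) * pi_mat G d rho n (Q_alpha G c0 ms)
    = mat (n*d) (n*d) (\<lambda>(I,J). \<Sum>l<n. (\<Sum>k<n. Q_coef c0 ms (I div d) k * pi_cg G d rho (adj_mat gam k l) $$ (I mod d, J mod d)) * Q_coef c0 ms l (J div d))"
    unfolding M1 unfolding PQ[OF d]
    by (rule mult_right[OF d, where c="Q_coef c0 ms" and bb="\<lambda>i l a b. \<Sum>k<n. Q_coef c0 ms i k * pi_cg G d rho (adj_mat gam k l) $$ (a,b)"])
  show ?thesis unfolding M2
  proof (rule eq_matI)
    fix I J assume I: "I < dim_row (mat (n*d) (n*d) (\<lambda>(I,J). \<Sum>l<n. (\<Sum>k<n. Q_coef c0 ms (I div d) k * pi_cg G d rho (adj_mat gam k l) $$ (I mod d, J mod d)) * Q_coef c0 ms l (J div d)))"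
      and J: "J < dim_col (mat (n*d) (n*d) (\<lambda>(I,J). \<Sum>l<n. (\<Sum>k<n. Q_coef c0 ms (I div d) k * pi_cg G d rho (adj_mat gam k l) $$ (I mod d, J mod d)) * Q_coef c0 ms l (J div d)))"
    have I': "I < n*d" and J': "J < n*d" using I J by auto
    have i: "I div d < n" using I' by (simp add: less_mult_imp_div_less)
    have j: "J div d < n" using J' by (simp add: less_mult_imp_div_less)
    have a: "I mod d < d" and b: "J mod d < d" using d by auto
    have P: "pi_cg G d rho (adj_mat gam k l) $$ (I mod d, J mod d) = valo rho (gam k l) (I mod d) (J mod d)" for k l
      unfolding adj_mat_def using pi_cg_emb[OF gam_car a b] .
    have "pi_mat G d rho n (adj_mat (alpha_graph G c0 ms gam)) $$ (I, J)
       = valo rho (alpha_graph G c0 ms gam (I div d) (J div d)) (I mod d) (J mod d)"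
      using I' J' pi_cg_emb[OF alpha_car[OF i j d] a b] by (simp add: pi_mat_def adj_mat_def)
    also have "\<dots> = (\<Sum>l<n. (\<Sum>k<n. Q_coef c0 ms (I div d) k * valo rho (gam k l) (I mod d) (J mod d)) * Q_coef c0 ms l (J div d))"
      using core[OF i j a b] .
    finally show "pi_mat G d rho n (adj_mat (alpha_graph G c0 ms gam)) $$ (I, J) =
         mat (n*d) (n*d) (\<lambda>(I,J). \<Sum>l<n. (\<Sum>k<n. Q_coef c0 ms (I div d) k * pi_cg G d rho (adj_mat gam k l) $$ (I mod d, J mod d)) * Q_coef c0 ms l (J div d)) $$ (I, J)"
      using I' J' by (simp add: P)
  qed (auto simp: pi_mat_def)
qed

lemma QQ: "pi_mat G d rho n (Q_alpha G c0 ms) * pi_mat G d rho n (Q_alpha G c0 ms) = 1\<^sub>m (n*d)"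
proof (cases "d = 0")
  case True
  then show ?thesis by (intro eq_matI) (auto simp: pi_mat_def)
next
  case False
  then have d: "0 < d" by simp
  have M: "pi_mat G d rho n (Q_alpha G c0 ms) * pi_mat G d rho n (Q_alpha G c0 ms)
    = mat (n*d) (n*d) (\<lambda>(I,J). \<Sum>k<n. Q_coef c0 ms (I div d) k * (Q_coef c0 ms k (J div d) * (if I mod d = J mod d then 1 else 0)))"
    unfolding PQ[OF d]
    by (rule mult_left[OF d, where c="Q_coef c0 ms" and bb="\<lambda>k l a b. Q_coef c0 ms k l * (if a = b then 1 else 0)"])
  show ?thesis unfolding M
  proof (rule eq_matI)
    fix I J assume "I < dim_row (1\<^sub>m (n*d) :: complex mat)" "J < dim_col (1\<^sub>m (n*d) :: complex mat)"
    then have I': "I < n*d" and J': "J < n*d" by auto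
    have i: "I div d < n" using I' by (simp add: less_mult_imp_div_less)
    have j: "J div d < n" using J' by (simp add: less_mult_imp_div_less)
    have S: "(\<Sum>k<n. Q_coef c0 ms (I div d) k * (Q_coef c0 ms k (J div d) * (if I mod d = J mod d then 1 else 0)))
      = (if I div d = J div d then 1 else 0) * (if I mod d = J mod d then 1 else 0)"
      using QQ_sum[OF nd i j mpos] by (simp add: sum_distrib_right[symmetric] mult.assoc[symmetric])
    have "(I = J) = (I div d = J div d \<and> I mod d = J mod d)" by (metis div_mult_mod_eq)
    then show "mat (n*d) (n*d) (\<lambda>(I,J). \<Sum>k<n. Q_coef c0 ms (I div d) k * (Q_coef c0 ms k (J div d) * (if I mod d = J mod d then 1 else 0))) $$ (I, J)
       = 1\<^sub>m (n*d) $$ (I, J)" using I' J' S by auto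
  qed auto
qed

lemma cospec: "pi_cospectral G d rho n gam (alpha_graph G c0 ms gam)"
proof -
  let ?Q = "pi_mat G d rho n (Q_alpha G c0 ms)" let ?A = "pi_mat G d rho n (adj_mat gam)"
  have car: "?Q \<in> carrier_mat (n*d) (n*d)" "?A \<in> carrier_mat (n*d) (n*d)" by (auto simp: pi_mat_def)
  have "similar_mat (?Q * ?A * ?Q) ?A"
    unfolding similar_mat_def
    by (rule exI[of _ ?Q], rule exI[of _ ?Q], rule similar_mat_witI[OF QQ QQ refl]) (use car in auto)
  then have "char_poly (?Q * ?A * ?Q) = char_poly ?A" by (rule char_poly_similar)
  then show ?thesis unfolding pi_cospectral_def pi_spectrum_def main_eq by simp
qed

end

theorem mainTheorem3:
  fixes G :: "('g, 'b) monoid_scheme" and d c0 n :: nat and ms :: "nat list"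
    and gam :: "nat \<Rightarrow> nat \<Rightarrow> 'g option" and rho :: "'g \<Rightarrow> complex mat"
  assumes "group G"
    and "n = c0 + 2 * sum_list ms"
    and "\<forall>m\<in>set ms. m \<ge> 1"
    and "gain_graph G n gam"
    and "unitary_rep G d rho"
    and "pi_WQH G d rho c0 ms gam"
  shows "pi_mat G d rho n (adj_mat (alpha_graph G c0 ms gam))
           = pi_mat G d rho n (Q_alpha G c0 ms) * pi_mat G d rho n (adj_mat gam) * pi_mat G d rho n (Q_alpha G c0 ms)
         \<and> pi_cospectral G d rho n gam (alpha_graph G c0 ms gam)"
proof -
  interpret wq G d c0 n ms gam rho by (rule wq.intro[OF assms])
  show ?thesis using main_eq cospec by blast
qed


end
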